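(* Let $G$ be a finite, simple, connected graph of order $n\ge 4$, and let $u,w_1,w_2\in V(G)$ with $\deg(u)=n-3$ and $V(G)=N[u]\cup\{w_1,w_2\}$. Then $\{u\}$ is a power dominating set of $G$ if and only if $w_1$ and $w_2$ are not twins.
   Context: Two vertices $x,y$ are twins if $N(x)=N(y)$ or $N[x]=N[y]$. For $U\subseteq V(G)$, $cl(U)$ is obtained by coloring $U$ black and repeatedly applying: if a black vertex has exactly one white neighbor, that neighbor becomes black. $S$ is a power dominating set if $cl(N[S])=V(G)$. *)

theory Defs
  imports Main
begin

definition simple_graph :: "'a set \<Rightarrow> ('a \<Rightarrow> 'a \<Rightarrow> bool) \<Rightarrow> bool" where
  "simple_graph V E \<longleftrightarrow> finite V \<and> (\<forall>x y. E x y \<longrightarrow> x \<in> V \<and> y \<in> V)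
     \<and> (\<forall>x y. E x y \<longrightarrow> E y x) \<and> (\<forall>x. \<not> E x x)"

definition connected_graph :: "'a set \<Rightarrow> ('a \<Rightarrow> 'a \<Rightarrow> bool) \<Rightarrow> bool" where
  "connected_graph V E \<longleftrightarrow> (\<forall>x\<in>V. \<forall>y\<in>V. E\<^sup>*\<^sup>* x y)"

definition nbhd :: "'a set \<Rightarrow> ('a \<Rightarrow> 'a \<Rightarrow> bool) \<Rightarrow> 'a \<Rightarrow> 'a set" where
  "nbhd V E x = {y \<in> V. E x y}"

definition cnbhd :: "'a set \<Rightarrow> ('a \<Rightarrow> 'a \<Rightarrow> bool) \<Rightarrow> 'a \<Rightarrow> 'a set" where
  "cnbhd V E x = insert x (nbhd V E x)"

definition deg :: "'a set \<Rightarrow> ('a \<Rightarrow> 'a \<Rightarrow> bool) \<Rightarrow> 'a \<Rightarrow> nat" where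
  "deg V E x = card (nbhd V E x)"

definition cnbhd_set :: "'a set \<Rightarrow> ('a \<Rightarrow> 'a \<Rightarrow> bool) \<Rightarrow> 'a set \<Rightarrow> 'a set" where
  "cnbhd_set V E S = (\<Union>s\<in>S. cnbhd V E s)"

definition twins :: "'a set \<Rightarrow> ('a \<Rightarrow> 'a \<Rightarrow> bool) \<Rightarrow> 'a \<Rightarrow> 'a \<Rightarrow> bool" where
  "twins V E x y \<longleftrightarrow> nbhd V E x = nbhd V E y \<or> cnbhd V E x = cnbhd V E y"

text \<open>One propagation (colour change) step: a black vertex with exactly one white
  neighbour turns that neighbour black.\<close>
definition force_step :: "'a set \<Rightarrow> ('a \<Rightarrow> 'a \<Rightarrow> bool) \<Rightarrow> 'a set \<Rightarrow> 'a set \<Rightarrow> bool" where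
  "force_step V E B B' \<longleftrightarrow> (\<exists>v\<in>B. \<exists>w. nbhd V E v - B = {w} \<and> B' = insert w B)"

definition cl :: "'a set \<Rightarrow> ('a \<Rightarrow> 'a \<Rightarrow> bool) \<Rightarrow> 'a set \<Rightarrow> 'a set" where
  "cl V E U = \<Union>{B. (force_step V E)\<^sup>*\<^sup>* U B}"

definition power_dominating :: "'a set \<Rightarrow> ('a \<Rightarrow> 'a \<Rightarrow> bool) \<Rightarrow> 'a set \<Rightarrow> bool" where
  "power_dominating V E S \<longleftrightarrow> S \<subseteq> V \<and> cl V E (cnbhd_set V E S) = V"

end

theory Submission
  imports Defs
begin

lemma reach_sub:
  assumes "simple_graph V E" "(force_step V E)\<^sup>*\<^sup>* U B" "U \<subseteq> V"
  shows "B \<subseteq> V"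
  using assms(2,3)
proof (induction rule: rtranclp_induct)
  case base then show ?case by simp
next
  case (step y z)
  then show ?case using assms(1)
    unfolding force_step_def nbhd_def simple_graph_def by blast
qed

lemma cl_sub:
  assumes "simple_graph V E" "U \<subseteq> V"
  shows "cl V E U \<subseteq> V"
  using reach_sub[OF assms(1) _ assms(2)] unfolding cl_def by blast

lemma cl_stuck:
  assumes "\<And>B'. \<not> force_step V E U B'"
  shows "cl V E U = U"
proof -
  have "B = U" if "(force_step V E)\<^sup>*\<^sup>* U B" for B
    using that by (cases rule: converse_rtranclpE) (auto simp: assms)
  then show ?thesis unfolding cl_def by auto
qed

lemma two_steps:
  assumes sg: "simple_graph V E" and cg: "connected_graph V E"
    and V: "V = C \<union> {a, b}" and aC: "a \<notin> C" and bC: "b \<notin> C" and ab: "a \<noteq> b"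
    and vC: "v \<in> C" and va: "E v a" and vb: "\<not> E v b" and uC: "u \<in> C"
  shows "(force_step V E)\<^sup>*\<^sup>* C V"
proof -
  have "nbhd V E v - C = {a}"
    using V aC va vb unfolding nbhd_def by auto
  then have s1: "force_step V E C (insert a C)"
    unfolding force_step_def using vC by blast
  have "E\<^sup>*\<^sup>* u b" using cg uC V unfolding connected_graph_def by auto
  moreover have "u \<noteq> b" using uC bC by auto
  ultimately obtain x where x: "E x b"
    by (metis rtranclp.cases)
  have xV: "x \<in> V" "x \<noteq> b" using x sg unfolding simple_graph_def by metis+
  have "nbhd V E x - insert a C = {b}"
    using V x xV aC bC ab sg unfolding nbhd_def simple_graph_def by auto
  then have s2: "force_step V E (insert a C) (insert b (insert a C))"
    unfolding force_step_def using xV V by blast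
  have "insert b (insert a C) = V" using V by auto
  then show ?thesis using s1 s2 by (metis rtranclp.rtrancl_into_rtrancl rtranclp.rtrancl_refl)
qed

theorem mainTheorem6:
  fixes V :: "'a set" and E :: "'a \<Rightarrow> 'a \<Rightarrow> bool" and u w1 w2 :: 'a
  assumes "simple_graph V E"
    and "connected_graph V E"
    and "card V \<ge> 4"
    and "u \<in> V" and "w1 \<in> V" and "w2 \<in> V"
    and "deg V E u = card V - 3"
    and "V = cnbhd V E u \<union> {w1, w2}"
  shows "power_dominating V E {u} \<longleftrightarrow> \<not> twins V E w1 w2"
proof -
  note sg = assms(1)
  define C where "C = cnbhd V E u"
  have fin: "finite V" using sg unfolding simple_graph_def by auto
  have irr: "\<And>x. \<not> E x x" and sym: "\<And>x y. E x y \<Longrightarrow> E y x"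
    using sg unfolding simple_graph_def by auto
  have unb: "u \<notin> nbhd V E u" using irr unfolding nbhd_def by auto
  have finN: "finite (nbhd V E u)" using fin unfolding nbhd_def by auto
  have cardC: "card C = card V - 2"
    unfolding C_def cnbhd_def using unb finN assms(7,3) unfolding deg_def by simp
  have CV: "C \<subseteq> V" unfolding C_def cnbhd_def nbhd_def using assms(4) by auto
  have VV: "V = C \<union> ({w1, w2} - C)" using assms(8) unfolding C_def by auto
  have "card V \<le> card C + card ({w1, w2} - C)"
    by (subst VV) (rule card_Un_le)
  then have c2: "card ({w1, w2} - C) \<ge> 2" using cardC assms(3) by linarith
  have key: "w1 \<notin> C \<and> w2 \<notin> C \<and> w1 \<noteq> w2"
  proof (rule ccontr)
    assume "\<not> ?thesis"
    then have "\<exists>z. {w1, w2} - C \<subseteq> {z}" by auto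
    then obtain z where "{w1, w2} - C \<subseteq> {z}" by blast
    then have "card ({w1, w2} - C) \<le> card {z}"
      by (intro card_mono) auto
    then have "card ({w1, w2} - C) \<le> 1" by simp
    then show False using c2 by linarith
  qed
  have V2: "V = C \<union> {w1, w2}" using assms(8) unfolding C_def by auto
  have NS: "cnbhd_set V E {u} = C" unfolding cnbhd_set_def C_def by simp
  show ?thesis
  proof
    assume pd: "power_dominating V E {u}"
    show "\<not> twins V E w1 w2"
    proof
      assume tw: "twins V E w1 w2"
      have eq: "\<forall>v\<in>C. E v w1 \<longleftrightarrow> E v w2"
      proof
        fix v assume "v \<in> C"
        then have "v \<noteq> w1" "v \<noteq> w2" "v \<in> V" using key CV by auto
        then show "E v w1 \<longleftrightarrow> E v w2" using tw sym
          unfolding twins_def cnbhd_def nbhd_def by blast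
      qed
      have "\<not> force_step V E C B'" for B'
      proof
        assume "force_step V E C B'"
        then obtain v w where v: "v \<in> C" "nbhd V E v - C = {w}"
          unfolding force_step_def by blast
        then have "w \<in> V" "w \<notin> C" "E v w" unfolding nbhd_def by auto
        then have "w = w1 \<or> w = w2" using V2 by auto
        then show False
        proof
          assume "w = w1"
          then have "E v w2" using eq v(1) \<open>E v w\<close> by blast
          then have "w2 \<in> nbhd V E v - C" using key assms(6) unfolding nbhd_def by auto
          then show False using v(2) key \<open>w = w1\<close> by auto
        next
          assume "w = w2"
          then have "E v w1" using eq v(1) \<open>E v w\<close> by blast
          then have "w1 \<in> nbhd V E v - C" using key assms(5) unfolding nbhd_def by auto
          then show False using v(2) key \<open>w = w2\<close> by auto
        qed
      qed
      then have "cl V E C = C" by (rule cl_stuck)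
      then show False using pd NS key assms(5) unfolding power_dominating_def by auto
    qed
  next
    assume nt: "\<not> twins V E w1 w2"
    have "\<exists>v\<in>C. E v w1 \<noteq> E v w2"
    proof (rule ccontr)
      assume "\<not> ?thesis"
      then have eq: "\<forall>v\<in>C. E v w1 \<longleftrightarrow> E v w2" by blast
      show False
      proof (cases "E w1 w2")
        case True
        have "cnbhd V E w1 = cnbhd V E w2"
          unfolding cnbhd_def nbhd_def using eq V2 True sym assms(5,6) by blast
        then show False using nt unfolding twins_def by blast
      next
        case False
        have "nbhd V E w1 = nbhd V E w2"
          unfolding nbhd_def using eq V2 False sym irr by blast
        then show False using nt unfolding twins_def by blast
      qed
    qed
    then obtain v where v: "v \<in> C" "E v w1 \<noteq> E v w2" by blast
    have uC: "u \<in> C" unfolding C_def cnbhd_def by simp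
    have r: "(force_step V E)\<^sup>*\<^sup>* C V"
    proof (cases "E v w1")
      case True
      then show ?thesis using two_steps[OF sg assms(2) V2, of v u] key v uC by auto
    next
      case False
      have V2': "V = C \<union> {w2, w1}" using V2 by auto
      show ?thesis using two_steps[OF sg assms(2) V2', of v u] key v uC False by auto
    qed
    have "V \<subseteq> cl V E C" using r unfolding cl_def by blast
    moreover have "cl V E C \<subseteq> V" using cl_sub[OF sg CV] .
    ultimately show "power_dominating V E {u}"
      unfolding power_dominating_def NS using assms(4) by auto
  qed
qed

end
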